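(* Let $u$ be a smooth solution on $[0,1]\times[0,T]$ of $$u_t=\frac{u_{xx}}{1+u_x^2}+g(x,u)\sqrt{1+u_x^2}$$ satisfying $u(0,t)-u(0,0)=u(1,t)-u(1,0)$ and $u_x(0,t)=u_x(1,t)$ for all $t\in[0,T]$, and let $F(x):=\int_0^x\arctan(t)\,dt=x\arctan x-\log\sqrt{1+x^2}$. Then there is a constant $C>0$ depending only on $\|g\|_{L^\infty}$ such that for all $t\in[0,T]$ $$\partial_t\int_0^1\sqrt{1+u_x^2}\,dx\le C\int_0^1\sqrt{1+u_x^2}\,dx,$$ $$\partial_t\int_0^1F(u_x)\,dx\le C\int_0^1(1+u_x^2)\,dx,$$ $$\partial_t\int_0^1\big(1+u_x^2\big)^{3/2}dx\le C+C\Big(\int_0^1\big(1+u_x^2\big)^{3/2}dx\Big)^3.$$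
   Context: $g\in C^\infty(\mathbb{R}^2)$ is bounded with all derivatives bounded, and 1-periodic in each variable. Subscripts denote partial derivatives. *)

theory Defs
  imports "HOL-Analysis.Analysis"
begin

definition partials_family ::
  "real set \<Rightarrow> real set \<Rightarrow> (real \<Rightarrow> real \<Rightarrow> real) \<Rightarrow> (nat \<Rightarrow> nat \<Rightarrow> real \<Rightarrow> real \<Rightarrow> real) \<Rightarrow> bool" where
  "partials_family A B f D \<longleftrightarrow>
     D 0 0 = f \<and>
     (\<forall>i j. continuous_on (A \<times> B) (\<lambda>z. D i j (fst z) (snd z))) \<and>
     (\<forall>i j. \<forall>x\<in>A. \<forall>y\<in>B.
        ((\<lambda>s. D i j s y) has_real_derivative D (Suc i) j x y) (at x within A) \<and>
        ((\<lambda>s. D i j x s) has_real_derivative D i (Suc j) x y) (at y within B))"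

definition smooth2_on :: "real set \<Rightarrow> real set \<Rightarrow> (real \<Rightarrow> real \<Rightarrow> real) \<Rightarrow> bool" where
  "smooth2_on A B f \<longleftrightarrow> (\<exists>D. partials_family A B f D)"

definition smooth2_bounded_derivs :: "(real \<Rightarrow> real \<Rightarrow> real) \<Rightarrow> bool" where
  "smooth2_bounded_derivs f \<longleftrightarrow>
     (\<exists>D. partials_family UNIV UNIV f D \<and> (\<forall>i j. \<exists>K. \<forall>x y. \<bar>D i j x y\<bar> \<le> K))"

text \<open>F(x) = \<integral>_0^x arctan t dt = x arctan x - log sqrt(1+x^2).\<close>
definition Fat :: "real \<Rightarrow> real" where
  "Fat x = x * arctan x - ln (sqrt (1 + x\<^sup>2))"

end

theory Submission
  imports Defs
begin


lemma pf_cont_x: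
  assumes "partials_family A B f D" "t \<in> B"
  shows "continuous_on A (\<lambda>x. D i j x t)"
proof -
  have c: "continuous_on (A \<times> B) (\<lambda>z. D i j (fst z) (snd z))" using assms(1) unfolding partials_family_def by blast
  have "continuous_on A (\<lambda>x. (x, t))" by (intro continuous_intros)
  moreover have "(\<lambda>x. (x, t)) ` A \<subseteq> A \<times> B" using assms(2) by auto
  ultimately show ?thesis using continuous_on_compose2[OF c, of A "\<lambda>x. (x,t)"] by simp
qed

lemma pf_cont_swap:
  assumes "partials_family A B f D"
  shows "continuous_on (B \<times> A) (\<lambda>(s, x). D i j x s)"
proof -
  have c: "continuous_on (A \<times> B) (\<lambda>z. D i j (fst z) (snd z))" using assms(1) unfolding partials_family_def by blast
  have "continuous_on (B \<times> A) (\<lambda>z. (snd z, fst z))" by (intro continuous_intros)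
  moreover have "(\<lambda>z. (snd z, fst z)) ` (B \<times> A) \<subseteq> A \<times> B" by auto
  ultimately have "continuous_on (B \<times> A) (\<lambda>z. D i j (snd z) (fst z))"
    using continuous_on_compose2[OF c, of "B \<times> A" "\<lambda>z. (snd z, fst z)"] by simp
  then show ?thesis by (simp add: case_prod_beta)
qed

lemma pf_dx:
  assumes "partials_family A B f D" "x \<in> A" "t \<in> B"
  shows "((\<lambda>s. D i j s t) has_real_derivative D (Suc i) j x t) (at x within A)"
  using assms unfolding partials_family_def by blast

lemma pf_dt:
  assumes "partials_family A B f D" "x \<in> A" "t \<in> B"
  shows "((\<lambda>s. D i j x s) has_real_derivative D i (Suc j) x t) (at t within B)"
  using assms unfolding partials_family_def by blast

lemma deriv_unique_Icc:
  fixes a b :: real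
  assumes "a < b" "x \<in> {a..b}" "(f has_real_derivative d1) (at x within {a..b})"
    "(f has_real_derivative d2) (at x within {a..b})"
  shows "d1 = d2"
  using vector_derivative_unique_within_closed_interval[of a b x f d1 d2] assms
  by (simp add: has_real_derivative_iff_has_vector_derivative)

lemma deriv_transform:
  assumes "(f has_real_derivative d) (at a within S)" "a \<in> S" "\<And>x. x \<in> S \<Longrightarrow> f x = g x"
  shows "(g has_real_derivative d) (at a within S)"
  using has_field_derivative_transform_within[OF assms(1) zero_less_one assms(2)] assms(3) by blast

lemma young1:
  fixes k w Q E :: real
  assumes "k \<ge> 0" "w > 0"
  shows "- k * Q * (Q / w + E) \<le> k * w * E\<^sup>2 / 4"
proof -
  have "0 \<le> k * (Q + w * E / 2)\<^sup>2 / w" using assms by simp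
  also have "k * (Q + w * E / 2)\<^sup>2 / w = k * w * E\<^sup>2 / 4 + k * Q * (Q / w + E)"
    using assms by (simp add: field_simps power2_eq_square)
  finally show ?thesis by simp
qed

lemma young2:
  fixes k w Q E :: real
  assumes "k \<ge> 0" "w > 0"
  shows "- k * Q * (Q / w + E) \<le> - k * Q\<^sup>2 / (2 * w) + k * w * E\<^sup>2 / 2"
proof -
  have "0 \<le> k * (Q + w * E)\<^sup>2 / (2 * w)" using assms by simp
  also have "k * (Q + w * E)\<^sup>2 / (2 * w) = - k * Q\<^sup>2 / (2 * w) + k * Q * (Q / w + E) + k * w * E\<^sup>2 / 2"
    using assms by (simp add: field_simps power2_eq_square)
  finally show ?thesis by simp
qed

lemma leibniz_ibp:
  fixes \<Phi> \<Phi>1 \<Phi>2 :: "real \<Rightarrow> real"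
  assumes PF: "partials_family {0..1} {0..T} u D" and T: "T > 0"
    and per: "\<And>t. t \<in> {0..T} \<Longrightarrow> D 0 1 0 t = D 0 1 1 t \<and> D 1 0 0 t = D 1 0 1 t"
    and d1: "\<And>p. (\<Phi> has_real_derivative \<Phi>1 p) (at p)"
    and d2: "\<And>p. (\<Phi>1 has_real_derivative \<Phi>2 p) (at p)"
    and c2: "continuous_on UNIV \<Phi>2"
    and t: "t \<in> {0..T}"
  shows "((\<lambda>s. integral {0..1} (\<lambda>x. \<Phi> (D 1 0 x s))) has_real_derivative
           - integral {0..1} (\<lambda>x. \<Phi>2 (D 1 0 x t) * D 2 0 x t * D 0 1 x t)) (at t within {0..T})"
proof -
  have c1: "continuous_on UNIV \<Phi>1" using d2 by (meson DERIV_isCont continuous_at_imp_continuous_on)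
  have c0: "continuous_on UNIV \<Phi>" using d1 by (meson DERIV_isCont continuous_at_imp_continuous_on)
  note cx = pf_cont_x[OF PF]
  have L: "((\<lambda>s. integral {0..1} (\<lambda>x. \<Phi> (D 1 0 x s))) has_real_derivative
           integral {0..1} (\<lambda>x. \<Phi>1 (D 1 0 x t) * D 1 1 x t)) (at t within {0..T})"
  proof -
    have "((\<lambda>s. integral (cbox 0 1) (\<lambda>x. \<Phi> (D 1 0 x s))) has_real_derivative
           integral (cbox 0 1) (\<lambda>x. \<Phi>1 (D 1 0 x t) * D 1 1 x t)) (at t within {0..T})"
    proof (rule leibniz_rule_field_derivative[where f="\<lambda>s x. \<Phi> (D 1 0 x s)" and fx = "\<lambda>s x. \<Phi>1 (D 1 0 x s) * D 1 1 x s"])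
      fix s x :: real assume "s \<in> {0..T}" "x \<in> cbox 0 1"
      then show "((\<lambda>s. \<Phi> (D 1 0 x s)) has_real_derivative \<Phi>1 (D 1 0 x s) * D 1 1 x s) (at s within {0..T})"
        using DERIV_chain2[OF d1 pf_dt[OF PF, of x s 1 0]] by simp
    next
      fix s :: real assume "s \<in> {0..T}"
      then show "(\<lambda>x. \<Phi> (D 1 0 x s)) integrable_on cbox 0 1"
        by (auto intro!: integrable_continuous_real continuous_on_compose2[OF c0 cx])
    next
      have "continuous_on ({0..T} \<times> {0..1}) (\<lambda>z. \<Phi>1 ((\<lambda>(s,x). D 1 0 x s) z) * (\<lambda>(s,x). D 1 1 x s) z)"
        by (intro continuous_intros continuous_on_compose2[OF c1 pf_cont_swap[OF PF]] pf_cont_swap[OF PF]) auto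
      then show "continuous_on ({0..T} \<times> cbox 0 1) (\<lambda>(s, x). \<Phi>1 (D 1 0 x s) * D 1 1 x s)"
        by (simp add: case_prod_beta)
    qed (use t in auto)
    then show ?thesis by simp
  qed
  define h where "h x = \<Phi>1 (D 1 0 x t) * D 0 1 x t" for x
  have hd: "(h has_vector_derivative (\<Phi>2 (D 1 0 x t) * D 2 0 x t * D 0 1 x t + \<Phi>1 (D 1 0 x t) * D 1 1 x t)) (at x within {0..1})"
    if "x \<in> {0..1}" for x
  proof -
    have "(h has_real_derivative (\<Phi>2 (D 1 0 x t) * D 2 0 x t * D 0 1 x t + \<Phi>1 (D 1 0 x t) * D 1 1 x t)) (at x within {0..1})"
      unfolding h_def
      using DERIV_mult[OF DERIV_chain2[OF d2 pf_dx[OF PF that t, of 1 0]] pf_dx[OF PF that t, of 0 1]]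
      by (simp add: algebra_simps numeral_2_eq_2)
    then show ?thesis by (simp add: has_real_derivative_iff_has_vector_derivative)
  qed
  have "((\<lambda>x. \<Phi>2 (D 1 0 x t) * D 2 0 x t * D 0 1 x t + \<Phi>1 (D 1 0 x t) * D 1 1 x t) has_integral (h 1 - h 0)) {0..1}"
    by (rule fundamental_theorem_of_calculus) (use hd in auto)
  moreover have "h 1 - h 0 = 0" using per[OF t] by (simp add: h_def)
  ultimately have I0: "((\<lambda>x. \<Phi>2 (D 1 0 x t) * D 2 0 x t * D 0 1 x t + \<Phi>1 (D 1 0 x t) * D 1 1 x t) has_integral 0) {0..1}" by simp
  have i1: "(\<lambda>x. \<Phi>2 (D 1 0 x t) * D 2 0 x t * D 0 1 x t) integrable_on {0..1}"
    using t by (auto intro!: integrable_continuous_real continuous_intros continuous_on_compose2[OF c2 cx] cx)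
  have i2: "(\<lambda>x. \<Phi>1 (D 1 0 x t) * D 1 1 x t) integrable_on {0..1}"
    using t by (auto intro!: integrable_continuous_real continuous_intros continuous_on_compose2[OF c1 cx] cx)
  have "integral {0..1} (\<lambda>x. \<Phi>2 (D 1 0 x t) * D 2 0 x t * D 0 1 x t) + integral {0..1} (\<lambda>x. \<Phi>1 (D 1 0 x t) * D 1 1 x t) = 0"
    using integral_add[OF i1 i2] I0 by (simp add: integral_unique)
  then have "integral {0..1} (\<lambda>x. \<Phi>1 (D 1 0 x t) * D 1 1 x t) = - integral {0..1} (\<lambda>x. \<Phi>2 (D 1 0 x t) * D 2 0 x t * D 0 1 x t)"
    by linarith
  with L show ?thesis by simp
qed



lemma sq_pos: "0 < 1 + (p::real)\<^sup>2" by (simp add: add_pos_nonneg)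
lemma sqrt_pos1: "0 < sqrt (1 + (p::real)\<^sup>2)" by (simp add: add_pos_nonneg)
lemma s2: "sqrt (1 + (p::real)\<^sup>2) * sqrt (1 + p\<^sup>2) = 1 + p\<^sup>2"
  using sq_pos[of p] by (simp del: real_sqrt_mult_self add: real_sqrt_mult_self)

lemma d_s: "((\<lambda>p. sqrt (1 + p\<^sup>2)) has_real_derivative p / sqrt (1 + p\<^sup>2)) (at p)"
  using sq_pos[of p]
  by (auto intro!: derivative_eq_intros simp: field_simps)

lemma d_s1: "((\<lambda>p. p / sqrt (1 + p\<^sup>2)) has_real_derivative 1 / sqrt (1 + p\<^sup>2) ^ 3) (at p)"
  using sq_pos[of p] sqrt_pos1[of p] s2[of p]
  apply (auto intro!: derivative_eq_intros)
  apply (simp add: field_simps power3_eq_cube power2_eq_square)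
  done

lemma d_Fat: "(Fat has_real_derivative arctan p) (at p)"
  unfolding Fat_def using sq_pos[of p] sqrt_pos1[of p] s2[of p]
  apply (auto intro!: derivative_eq_intros)
  apply (simp add: field_simps power2_eq_square)
  done

lemma d_c: "((\<lambda>p. sqrt (1 + p\<^sup>2) ^ 3) has_real_derivative 3 * p * sqrt (1 + p\<^sup>2)) (at p)"
  using sq_pos[of p] sqrt_pos1[of p] s2[of p]
  apply (auto intro!: derivative_eq_intros)
  apply (simp add: field_simps power2_eq_square)
  done

lemma d_c1: "((\<lambda>p. 3 * p * sqrt (1 + p\<^sup>2)) has_real_derivative 3 * sqrt (1 + p\<^sup>2) + 3 * p\<^sup>2 / sqrt (1 + p\<^sup>2)) (at p)"
  using sq_pos[of p] sqrt_pos1[of p] s2[of p]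
  apply (auto intro!: derivative_eq_intros)
  apply (simp add: field_simps power2_eq_square)
  done

lemma c_s1: "continuous_on UNIV (\<lambda>p::real. 1 / sqrt (1 + p\<^sup>2) ^ 3)"
  using sq_pos by (auto intro!: continuous_intros) (metis less_irrefl)
lemma c_F: "continuous_on UNIV (\<lambda>p::real. 1 / (1 + p\<^sup>2))"
  using sq_pos by (auto intro!: continuous_intros) (metis less_irrefl)
lemma c_c1: "continuous_on UNIV (\<lambda>p::real. 3 * sqrt (1 + p\<^sup>2) + 3 * p\<^sup>2 / sqrt (1 + p\<^sup>2))"
  using sq_pos by (auto intro!: continuous_intros) (metis less_irrefl)
lemma d_arctan: "(arctan has_real_derivative 1 / (1 + p\<^sup>2)) (at p)"
  using DERIV_arctan[of p] by (simp add: divide_inverse)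



lemma osc:
  fixes f f' :: "real \<Rightarrow> real"
  assumes d: "\<And>x. x \<in> {0..1} \<Longrightarrow> (f has_real_derivative f' x) (at x within {0..1})"
    and c: "continuous_on {0..1} f'" and x: "x \<in> {0..1}" and y: "y \<in> {0..1}"
  shows "f x - f y \<le> integral {0..1} (\<lambda>z. \<bar>f' z\<bar>)"
proof -
  have ca: "continuous_on {0..1} (\<lambda>z. \<bar>f' z\<bar>)" using c by (intro continuous_intros)
  have key: "\<bar>f b - f a\<bar> \<le> integral {0..1} (\<lambda>z. \<bar>f' z\<bar>)" if ab: "a \<in> {0..1}" "b \<in> {0..1}" "a \<le> b" for a b
  proof -
    have sub: "{a..b} \<subseteq> {0..1}" using ab by auto
    have "(f' has_integral (f b - f a)) {a..b}"
    proof (rule fundamental_theorem_of_calculus[OF ab(3)])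
      fix z assume z: "z \<in> {a..b}"
      then have "z \<in> {0..1}" using sub by auto
      from DERIV_subset[OF d[OF this] sub] show "(f has_vector_derivative f' z) (at z within {a..b})"
        by (simp add: has_real_derivative_iff_has_vector_derivative)
    qed
    then have e: "f b - f a = integral {a..b} f'" by (simp add: integral_unique)
    have i1: "f' integrable_on {a..b}" by (intro integrable_continuous_real continuous_on_subset[OF c sub])
    have i2: "(\<lambda>z. \<bar>f' z\<bar>) integrable_on {a..b}" by (intro integrable_continuous_real continuous_on_subset[OF ca sub])
    have "\<bar>integral {a..b} f'\<bar> \<le> integral {a..b} (\<lambda>z. \<bar>f' z\<bar>)"
      using integral_norm_bound_integral[OF i1 i2] by simp
    also have "\<dots> \<le> integral {0..1} (\<lambda>z. \<bar>f' z\<bar>)"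
      by (rule integral_subset_le[OF sub i2]) (auto intro: integrable_continuous_real[OF ca])
    finally show ?thesis using e by simp
  qed
  show ?thesis
  proof (cases "y \<le> x")
    case True then show ?thesis using key[OF y x] by simp
  next
    case False then show ?thesis using key[OF x y] by simp
  qed
qed

lemma powr32: "(1 + (p::real)\<^sup>2) powr (3/2) = sqrt (1 + p\<^sup>2) ^ 3"
proof -
  have "(1 + p\<^sup>2) powr (3/2) = (1 + p\<^sup>2) powr 1 * (1 + p\<^sup>2) powr (1/2)"
    using powr_add[of "1 + p\<^sup>2" 1 "1/2"] by simp
  also have "\<dots> = (1 + p\<^sup>2) * sqrt (1 + p\<^sup>2)"
    using sq_pos[of p] by (simp add: powr_half_sqrt)
  also have "\<dots> = sqrt (1 + p\<^sup>2) ^ 3" using s2[of p] by (simp add: power3_eq_cube)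
  finally show ?thesis .
qed



lemma sge1: "1 \<le> sqrt (1 + (p::real)\<^sup>2)" by simp

lemma Esq:
  fixes V Q p M :: real
  assumes "\<bar>V - Q / (1 + p\<^sup>2)\<bar> \<le> M * sqrt (1 + p\<^sup>2)"
  shows "(V - Q / (1 + p\<^sup>2))\<^sup>2 \<le> M\<^sup>2 * (1 + p\<^sup>2)"
proof -
  have "(V - Q / (1 + p\<^sup>2))\<^sup>2 = \<bar>V - Q / (1 + p\<^sup>2)\<bar>\<^sup>2" by simp
  also have "\<dots> \<le> (M * sqrt (1 + p\<^sup>2))\<^sup>2" by (rule power_mono[OF assms]) simp
  also have "\<dots> = M\<^sup>2 * (1 + p\<^sup>2)" by (simp add: power_mult_distrib add_nonneg_nonneg)
  finally show ?thesis .
qed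

lemma pt1:
  fixes V Q p M :: real
  assumes "\<bar>V - Q / (1 + p\<^sup>2)\<bar> \<le> M * sqrt (1 + p\<^sup>2)"
  shows "- (1 / sqrt (1 + p\<^sup>2) ^ 3 * Q * V) \<le> M\<^sup>2 / 4 * sqrt (1 + p\<^sup>2)"
proof -
  define w where "w = 1 + p\<^sup>2"
  define s where "s = sqrt w"
  define E where "E = V - Q / w"
  have w: "w > 0" "s > 0" "s * s = w" unfolding w_def s_def using sq_pos s2 sqrt_pos1 by auto
  have V: "V = Q / w + E" unfolding E_def using w by simp
  have E2: "E\<^sup>2 \<le> M\<^sup>2 * w" using Esq[OF assms] unfolding E_def w_def .
  have "- (1 / s ^ 3 * Q * V) = - (1 / s^3) * Q * (Q / w + E)" using V by simp
  also have "\<dots> \<le> (1 / s^3) * w * E\<^sup>2 / 4" by (rule young1) (use w in auto)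
  also have "\<dots> \<le> (1 / s^3) * w * (M\<^sup>2 * w) / 4"
    using E2 w by (intro divide_right_mono mult_left_mono) auto
  also have "\<dots> = M\<^sup>2 / 4 * s" using w by (simp add: field_simps power3_eq_cube)
  finally show ?thesis unfolding s_def w_def .
qed

lemma pt2:
  fixes V Q p M :: real
  assumes "\<bar>V - Q / (1 + p\<^sup>2)\<bar> \<le> M * sqrt (1 + p\<^sup>2)"
  shows "- (1 / (1 + p\<^sup>2) * Q * V) \<le> M\<^sup>2 / 4 * (1 + p\<^sup>2)"
proof -
  define w where "w = 1 + p\<^sup>2"
  define E where "E = V - Q / w"
  have w: "w > 0" unfolding w_def using sq_pos by auto
  have V: "V = Q / w + E" unfolding E_def using w by simp
  have E2: "E\<^sup>2 \<le> M\<^sup>2 * w" using Esq[OF assms] unfolding E_def w_def .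
  have "- (1 / w * Q * V) = - (1 / w) * Q * (Q / w + E)" using V by simp
  also have "\<dots> \<le> (1 / w) * w * E\<^sup>2 / 4" by (rule young1) (use w in auto)
  also have "\<dots> \<le> (1 / w) * w * (M\<^sup>2 * w) / 4"
    using E2 w by (intro divide_right_mono mult_left_mono) auto
  also have "\<dots> = M\<^sup>2 / 4 * w" using w by (simp add: field_simps)
  finally show ?thesis unfolding w_def .
qed

lemma pt3:
  fixes V Q p M :: real
  assumes "\<bar>V - Q / (1 + p\<^sup>2)\<bar> \<le> M * sqrt (1 + p\<^sup>2)"
  shows "- ((3 * sqrt (1 + p\<^sup>2) + 3 * p\<^sup>2 / sqrt (1 + p\<^sup>2)) * Q * V)
           \<le> - (3/2) * (Q\<^sup>2 / sqrt (1 + p\<^sup>2)) + 3 * M\<^sup>2 * sqrt (1 + p\<^sup>2) ^ 5"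
proof -
  define w where "w = 1 + p\<^sup>2"
  define s where "s = sqrt w"
  define E where "E = V - Q / w"
  define k where "k = 3 * s + 3 * p\<^sup>2 / s"
  have w: "w > 0" "s > 0" "s * s = w" unfolding w_def s_def using sq_pos s2 sqrt_pos1 by auto
  have V: "V = Q / w + E" unfolding E_def using w by simp
  have E2: "E\<^sup>2 \<le> M\<^sup>2 * w" using Esq[OF assms] unfolding E_def w_def .
  have pw: "p\<^sup>2 = w - 1" unfolding w_def by simp
  have k1: "k \<ge> 3 * s" unfolding k_def using w by simp
  have k2: "k \<le> 6 * s"
  proof -
    have "3 * p\<^sup>2 / s \<le> 3 * s" using w pw by (simp add: field_simps)
    then show ?thesis unfolding k_def by simp
  qed
  have "- (k * Q * V) = - k * Q * (Q / w + E)" using V by simp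
  also have "\<dots> \<le> - k * Q\<^sup>2 / (2 * w) + k * w * E\<^sup>2 / 2" by (rule young2) (use w k1 in auto)
  also have "\<dots> \<le> - (3 * s) * Q\<^sup>2 / (2 * w) + (6 * s) * w * (M\<^sup>2 * w) / 2"
  proof -
    have "k * Q\<^sup>2 / (2 * w) \<ge> (3 * s) * Q\<^sup>2 / (2 * w)" using k1 w by (intro divide_right_mono mult_right_mono) auto
    moreover have "k * w * E\<^sup>2 / 2 \<le> (6 * s) * w * (M\<^sup>2 * w) / 2"
      using k2 w E2 k1 by (intro divide_right_mono mult_mono) auto
    ultimately show ?thesis by linarith
  qed
  also have "\<dots> = - (3/2) * (Q\<^sup>2 / s) + 3 * M\<^sup>2 * s ^ 5"
    unfolding w(3)[symmetric] using w(2) by (simp add: field_simps power2_eq_square eval_nat_numeral)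
  finally show ?thesis unfolding k_def s_def w_def .
qed

lemma pt4:
  fixes lam p Q :: real
  assumes "lam > 0"
  shows "\<bar>2 * p * Q\<bar> \<le> lam * sqrt (1 + p\<^sup>2) ^ 3 + Q\<^sup>2 / (lam * sqrt (1 + p\<^sup>2))"
proof -
  define s where "s = sqrt (1 + p\<^sup>2)"
  have s: "s > 0" "s * s = 1 + p\<^sup>2" unfolding s_def using s2 sqrt_pos1 by auto
  have ps: "\<bar>p\<bar> \<le> s" unfolding s_def by (simp add: real_le_rsqrt)
  have "\<bar>2 * p * Q\<bar> \<le> 2 * s * \<bar>Q\<bar>" using ps by (simp add: abs_mult mult_right_mono)
  also have "\<dots> \<le> lam * s ^ 3 + Q\<^sup>2 / (lam * s)"
  proof -
    have "0 \<le> (lam * s * s - \<bar>Q\<bar>)\<^sup>2 / (lam * s)" using s assms by simp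
    also have "\<dots> = lam * s ^ 3 + Q\<^sup>2 / (lam * s) - 2 * s * \<bar>Q\<bar>"
      using s(1) assms by (simp add: field_simps power2_eq_square power3_eq_cube abs_mult_self_eq)
    finally show ?thesis by simp
  qed
  finally show ?thesis unfolding s_def .
qed

lemma pt5: "1 + (p::real)\<^sup>2 \<le> sqrt (1 + p\<^sup>2) ^ 3"
proof -
  have "1 + p\<^sup>2 = sqrt (1 + p\<^sup>2) * sqrt (1 + p\<^sup>2) * 1" using s2 by simp
  also have "\<dots> \<le> sqrt (1 + p\<^sup>2) * sqrt (1 + p\<^sup>2) * sqrt (1 + p\<^sup>2)"
    by (rule mult_left_mono) auto
  finally show ?thesis by (simp add: power3_eq_cube)
qed

lemma pt6: "1 + (p::real)\<^sup>2 \<le> S \<Longrightarrow> sqrt (1 + p\<^sup>2) ^ 5 \<le> S * sqrt (1 + p\<^sup>2) ^ 3"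
proof -
  assume a: "1 + p\<^sup>2 \<le> S"
  have "sqrt (1 + p\<^sup>2) ^ 5 = (1 + p\<^sup>2) * sqrt (1 + p\<^sup>2) ^ 3"
    using s2[of p] by (simp add: eval_nat_numeral algebra_simps)
  also have "\<dots> \<le> S * sqrt (1 + p\<^sup>2) ^ 3" by (rule mult_right_mono[OF a]) simp
  finally show ?thesis .
qed

lemma fin3:
  fixes I Gp d J M :: real
  assumes I: "I \<ge> 1" and G: "Gp \<ge> 0" and d: "d \<le> -(3/2) * Gp + 3 * M\<^sup>2 * J"
    and J: "J \<le> (I + 2 * (M\<^sup>2 + 1) * I * I + Gp / (2 * (M\<^sup>2 + 1) * I)) * I"
  shows "d \<le> (1 + 9 * M\<^sup>2 + 6 * M ^ 4) + (1 + 9 * M\<^sup>2 + 6 * M ^ 4) * I ^ 3"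
proof -
  have m0: "M\<^sup>2 \<ge> 0" by simp
  have m: "M\<^sup>2 + 1 > 0" "M\<^sup>2 \<ge> 0" using m0 by linarith+
  have "3 * M\<^sup>2 * J \<le> 3 * M\<^sup>2 * ((I + 2 * (M\<^sup>2 + 1) * I * I + Gp / (2 * (M\<^sup>2 + 1) * I)) * I)"
    using J m by (intro mult_left_mono) auto
  also have "\<dots> = 3 * M\<^sup>2 * I\<^sup>2 + 6 * M\<^sup>2 * (M\<^sup>2 + 1) * I ^ 3 + 3 * M\<^sup>2 * Gp / (2 * (M\<^sup>2 + 1))"
  proof -
    have p2: "2 * (M\<^sup>2 + 1) > 0" using m(1) by simp
    have I0: "I \<noteq> 0" "2 * (M\<^sup>2 + 1) \<noteq> 0" using I p2 by linarith+
    define X where "X = Gp / (2 * (M\<^sup>2 + 1) * I)"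
    have e: "X * I = Gp / (2 * (M\<^sup>2 + 1))" unfolding X_def using I0 by simp
    have "3 * M\<^sup>2 * ((I + 2 * (M\<^sup>2 + 1) * I * I + X) * I) = 3 * M\<^sup>2 * I\<^sup>2 + 6 * M\<^sup>2 * (M\<^sup>2 + 1) * I ^ 3 + 3 * M\<^sup>2 * (X * I)"
      by (simp add: algebra_simps power2_eq_square power3_eq_cube)
    then show ?thesis unfolding X_def[symmetric] e by simp
  qed
  also have "3 * M\<^sup>2 * Gp / (2 * (M\<^sup>2 + 1)) \<le> (3/2) * Gp"
  proof -
    have p2: "M\<^sup>2 + 1 > 0" using m(1) by simp
    have "3 * M\<^sup>2 * Gp / (2 * (M\<^sup>2 + 1)) = (M\<^sup>2 / (M\<^sup>2 + 1)) * ((3/2) * Gp)"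
      using p2 by (simp add: field_simps)
    also have "\<dots> \<le> (3/2) * Gp"
      by (rule mult_left_le_one_le) (use G p2 in auto)
    finally show ?thesis .
  qed
  also have "I\<^sup>2 \<le> I ^ 3" using I by (simp add: power2_eq_square power3_eq_cube)
  finally have "3 * M\<^sup>2 * J \<le> 3 * M\<^sup>2 * I ^ 3 + 6 * M\<^sup>2 * (M\<^sup>2 + 1) * I ^ 3 + (3/2) * Gp"
    using m by (simp add: mult_left_mono)
  then have "d \<le> (9 * M\<^sup>2 + 6 * M ^ 4) * I ^ 3"
    using d by (simp add: algebra_simps power2_eq_square power4_eq_xxxx)
  also have "\<dots> \<le> (1 + 9 * M\<^sup>2 + 6 * M ^ 4) * I ^ 3" using I by simp
  also have "\<dots> \<le> (1 + 9 * M\<^sup>2 + 6 * M ^ 4) + (1 + 9 * M\<^sup>2 + 6 * M ^ 4) * I ^ 3"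
    by (simp add: add_nonneg_nonneg)
  finally show ?thesis .
qed

lemma neg_int_le:
  fixes f g :: "real \<Rightarrow> real"
  assumes "f integrable_on S" "g integrable_on S" "\<And>x. x \<in> S \<Longrightarrow> - f x \<le> g x"
  shows "- integral S f \<le> integral S g"
proof -
  have "integral S (\<lambda>x. - f x) \<le> integral S g"
    using assms by (intro integral_le integrable_neg) auto
  then show ?thesis by (simp add: integral_neg)
qed



lemma cont_comp: "continuous_on UNIV \<phi> \<Longrightarrow> continuous_on A h \<Longrightarrow> continuous_on A (\<lambda>x. \<phi> (h x))"
  by (rule continuous_on_compose2[of UNIV \<phi> A h]) auto

lemma int_cm: "f integrable_on S \<Longrightarrow> (\<lambda>x. (c::real) * f x) integrable_on S"
  using integrable_on_cmult_left[of f S c] by simp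

lemma c_sq: "continuous_on UNIV (\<lambda>p::real. sqrt (1 + p\<^sup>2))"
  by (intro continuous_intros)
lemma c_w: "continuous_on UNIV (\<lambda>p::real. 1 + p\<^sup>2)"
  by (intro continuous_intros)
lemma c_cube: "continuous_on UNIV (\<lambda>p::real. sqrt (1 + p\<^sup>2) ^ 3)"
  by (intro continuous_intros)
lemma c_five: "continuous_on UNIV (\<lambda>p::real. sqrt (1 + p\<^sup>2) ^ 5)"
  by (intro continuous_intros)
lemma c_inv: "continuous_on UNIV (\<lambda>p::real. 1 / sqrt (1 + p\<^sup>2))"
  using sq_pos by (auto intro!: continuous_intros) (metis less_irrefl)

theorem lemma2p15:
  fixes M :: real
  shows "\<exists>C>0. \<forall>(g :: real \<Rightarrow> real \<Rightarrow> real) (u :: real \<Rightarrow> real \<Rightarrow> real)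
      (ux :: real \<Rightarrow> real \<Rightarrow> real) (uxx :: real \<Rightarrow> real \<Rightarrow> real) (ut :: real \<Rightarrow> real \<Rightarrow> real) (T :: real).
    smooth2_bounded_derivs g \<and>
    (\<forall>x y. g (x + 1) y = g x y \<and> g x (y + 1) = g x y) \<and>
    (\<forall>x y. \<bar>g x y\<bar> \<le> M) \<and>
    T > 0 \<and>
    smooth2_on {0..1} {0..T} u \<and>
    (\<forall>x\<in>{0..1}. \<forall>t\<in>{0..T}.
       ((\<lambda>y. u y t) has_real_derivative ux x t) (at x within {0..1}) \<and>
       ((\<lambda>y. ux y t) has_real_derivative uxx x t) (at x within {0..1}) \<and>
       ((\<lambda>s. u x s) has_real_derivative ut x t) (at t within {0..T}) \<and>
       ut x t = uxx x t / (1 + (ux x t)\<^sup>2) + g x (u x t) * sqrt (1 + (ux x t)\<^sup>2)) \<and>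
    (\<forall>t\<in>{0..T}. u 0 t - u 0 0 = u 1 t - u 1 0 \<and> ux 0 t = ux 1 t)
    \<longrightarrow>
    (\<forall>t\<in>{0..T}.
      (\<exists>d. ((\<lambda>s. integral {0..1} (\<lambda>x. sqrt (1 + (ux x s)\<^sup>2))) has_real_derivative d) (at t within {0..T})
           \<and> d \<le> C * integral {0..1} (\<lambda>x. sqrt (1 + (ux x t)\<^sup>2))) \<and>
      (\<exists>d. ((\<lambda>s. integral {0..1} (\<lambda>x. Fat (ux x s))) has_real_derivative d) (at t within {0..T})
           \<and> d \<le> C * integral {0..1} (\<lambda>x. 1 + (ux x t)\<^sup>2)) \<and>
      (\<exists>d. ((\<lambda>s. integral {0..1} (\<lambda>x. (1 + (ux x s)\<^sup>2) powr (3/2))) has_real_derivative d) (at t within {0..T})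
           \<and> d \<le> C + C * (integral {0..1} (\<lambda>x. (1 + (ux x t)\<^sup>2) powr (3/2))) ^ 3))"
proof -
  define C :: real where "C = 1 + 9 * M\<^sup>2 + 6 * M ^ 4"
  have m4: "M ^ 4 \<ge> 0" by (simp add: zero_le_even_power)
  have m2: "M\<^sup>2 \<ge> 0" by simp
  have Cpos: "C > 0" unfolding C_def using m4 m2 by linarith
  show ?thesis
  proof (rule exI[of _ C], intro conjI allI impI ballI)
    show "C > 0" by (rule Cpos)
    fix g u ux uxx ut :: "real \<Rightarrow> real \<Rightarrow> real" and T :: real
    assume H: "smooth2_bounded_derivs g \<and>
    (\<forall>x y. g (x + 1) y = g x y \<and> g x (y + 1) = g x y) \<and>
    (\<forall>x y. \<bar>g x y\<bar> \<le> M) \<and>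
    T > 0 \<and>
    smooth2_on {0..1} {0..T} u \<and>
    (\<forall>x\<in>{0..1}. \<forall>t\<in>{0..T}.
       ((\<lambda>y. u y t) has_real_derivative ux x t) (at x within {0..1}) \<and>
       ((\<lambda>y. ux y t) has_real_derivative uxx x t) (at x within {0..1}) \<and>
       ((\<lambda>s. u x s) has_real_derivative ut x t) (at t within {0..T}) \<and>
       ut x t = uxx x t / (1 + (ux x t)\<^sup>2) + g x (u x t) * sqrt (1 + (ux x t)\<^sup>2)) \<and>
    (\<forall>t\<in>{0..T}. u 0 t - u 0 0 = u 1 t - u 1 0 \<and> ux 0 t = ux 1 t)"
    have gM: "\<And>x y. \<bar>g x y\<bar> \<le> M" using H by blast
    have Tpos: "T > 0" using H by blast
    have sm: "smooth2_on {0..1} {0..T} u" using H by blast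
    have pde: "\<And>x t. x \<in> {0..1} \<Longrightarrow> t \<in> {0..T} \<Longrightarrow>
       ((\<lambda>y. u y t) has_real_derivative ux x t) (at x within {0..1}) \<and>
       ((\<lambda>y. ux y t) has_real_derivative uxx x t) (at x within {0..1}) \<and>
       ((\<lambda>s. u x s) has_real_derivative ut x t) (at t within {0..T}) \<and>
       ut x t = uxx x t / (1 + (ux x t)\<^sup>2) + g x (u x t) * sqrt (1 + (ux x t)\<^sup>2)"
      using H by blast
    have bc: "\<And>t. t \<in> {0..T} \<Longrightarrow> u 0 t - u 0 0 = u 1 t - u 1 0 \<and> ux 0 t = ux 1 t"
      using H by blast
    from sm obtain D where PF: "partials_family {0..1} {0..T} u D" unfolding smooth2_on_def by blast
    have D00: "D 0 0 = u" using PF unfolding partials_family_def by blast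
    have ux_eq: "ux x t = D 1 0 x t" if xt: "x \<in> {0..1}" "t \<in> {0..T}" for x t
    proof -
      have a: "((\<lambda>y. u y t) has_real_derivative ux x t) (at x within {0..1})" using pde[OF xt] by blast
      have b: "((\<lambda>y. u y t) has_real_derivative D 1 0 x t) (at x within {0..1})"
        using pf_dx[OF PF xt, of 0 0] by (simp add: D00)
      show ?thesis using deriv_unique_Icc[OF _ xt(1) a b] by simp
    qed
    have uxx_eq: "uxx x t = D 2 0 x t" if xt: "x \<in> {0..1}" "t \<in> {0..T}" for x t
    proof -
      have a0: "((\<lambda>y. ux y t) has_real_derivative uxx x t) (at x within {0..1})" using pde[OF xt] by blast
      have a: "((\<lambda>y. D 1 0 y t) has_real_derivative uxx x t) (at x within {0..1})"
        by (rule deriv_transform[OF a0 xt(1)]) (use ux_eq xt in auto)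
      have b: "((\<lambda>y. D 1 0 y t) has_real_derivative D 2 0 x t) (at x within {0..1})"
        using pf_dx[OF PF xt, of 1 0] by (simp add: numeral_2_eq_2)
      show ?thesis using deriv_unique_Icc[OF _ xt(1) a b] by simp
    qed
    have ut_eq: "ut x t = D 0 1 x t" if xt: "x \<in> {0..1}" "t \<in> {0..T}" for x t
    proof -
      have a: "((\<lambda>s. u x s) has_real_derivative ut x t) (at t within {0..T})" using pde[OF xt] by blast
      have b: "((\<lambda>s. u x s) has_real_derivative D 0 1 x t) (at t within {0..T})"
        using pf_dt[OF PF xt, of 0 0] by (simp add: D00)
      show ?thesis using deriv_unique_Icc[OF Tpos xt(2) a b] .
    qed
    have per: "D 0 1 0 t = D 0 1 1 t \<and> D 1 0 0 t = D 1 0 1 t" if t: "t \<in> {0..T}" for t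
    proof
      show "D 1 0 0 t = D 1 0 1 t" using bc[OF t] ux_eq[OF _ t, of 0] ux_eq[OF _ t, of 1] by simp
      have a: "((\<lambda>s. u 0 s - u 1 s) has_real_derivative D 0 1 0 t - D 0 1 1 t) (at t within {0..T})"
        using DERIV_diff[OF pf_dt[OF PF _ t, of 0 0 0] pf_dt[OF PF _ t, of 1 0 0]] by (simp add: D00)
      have b: "((\<lambda>s. u 0 s - u 1 s) has_real_derivative 0) (at t within {0..T})"
        by (rule deriv_transform[OF DERIV_const[of "u 0 0 - u 1 0"] t]) (use bc in force)
      show "D 0 1 0 t = D 0 1 1 t" using deriv_unique_Icc[OF Tpos t a b] by simp
    qed
    have Ebd: "\<bar>D 0 1 x t - D 2 0 x t / (1 + (D 1 0 x t)\<^sup>2)\<bar> \<le> M * sqrt (1 + (D 1 0 x t)\<^sup>2)"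
      if xt: "x \<in> {0..1}" "t \<in> {0..T}" for x t
    proof -
      have "D 0 1 x t - D 2 0 x t / (1 + (D 1 0 x t)\<^sup>2) = g x (u x t) * sqrt (1 + (D 1 0 x t)\<^sup>2)"
        using pde[OF xt] ux_eq[OF xt] uxx_eq[OF xt] ut_eq[OF xt] by simp
      then show ?thesis using gM[of x "u x t"] by (simp add: abs_mult mult_right_mono)
    qed
    fix t assume t: "t \<in> {0..T}"
    note cx = pf_cont_x[OF PF t]
    have perA: "\<And>t. t \<in> {0..T} \<Longrightarrow> D 0 1 0 t = D 0 1 1 t \<and> D 1 0 0 t = D 1 0 1 t" using per by blast
    have tr: "((\<lambda>s. integral {0..1} (\<lambda>x. \<Phi> (ux x s))) has_real_derivative d) (at t within {0..T})"
      if "((\<lambda>s. integral {0..1} (\<lambda>x. \<Phi> (D 1 0 x s))) has_real_derivative d) (at t within {0..T})" for \<Phi> d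
      by (rule deriv_transform[OF that t]) (auto intro!: integral_cong simp: ux_eq)
    have eqI: "integral {0..1} (\<lambda>x. \<Phi> (ux x t)) = integral {0..1} (\<lambda>x. \<Phi> (D 1 0 x t))" for \<Phi>
      using t by (auto intro!: integral_cong simp: ux_eq)
    have intc: "(\<lambda>x. \<phi> (D 1 0 x t)) integrable_on {0..1}" if "continuous_on UNIV \<phi>" for \<phi> :: "real \<Rightarrow> real"
      using integrable_continuous_real[OF cont_comp[OF that cx]] by simp
    have intd: "(\<lambda>x. \<phi> (D 1 0 x t) * D 2 0 x t * D 0 1 x t) integrable_on {0..1}" if "continuous_on UNIV \<phi>" for \<phi> :: "real \<Rightarrow> real"
      by (intro integrable_continuous_real continuous_intros cont_comp[OF that cx] cx)
      have L1: "((\<lambda>s. integral {0..1} (\<lambda>x. sqrt (1 + (D 1 0 x s)\<^sup>2))) has_real_derivative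
          - integral {0..1} (\<lambda>x. 1 / sqrt (1 + (D 1 0 x t)\<^sup>2) ^ 3 * D 2 0 x t * D 0 1 x t)) (at t within {0..T})"
        using leibniz_ibp[OF PF Tpos perA d_s d_s1 c_s1 t] .
      have e: "integral {0..1} (\<lambda>x. sqrt (1 + (ux x t)\<^sup>2)) = integral {0..1} (\<lambda>x. sqrt (1 + (D 1 0 x t)\<^sup>2))"
        using eqI[of "\<lambda>p. sqrt (1 + p\<^sup>2)"] by simp
      have "- integral {0..1} (\<lambda>x. 1 / sqrt (1 + (D 1 0 x t)\<^sup>2) ^ 3 * D 2 0 x t * D 0 1 x t)
            \<le> integral {0..1} (\<lambda>x. M\<^sup>2 / 4 * sqrt (1 + (D 1 0 x t)\<^sup>2))"
      proof (rule neg_int_le[OF intd[OF c_s1] intc])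
        show "continuous_on UNIV (\<lambda>p. M\<^sup>2 / 4 * sqrt (1 + p\<^sup>2))" by (intro continuous_intros)
        fix x :: real assume "x \<in> {0..1}"
        from pt1[OF Ebd[OF this t]]
        show "- (1 / sqrt (1 + (D 1 0 x t)\<^sup>2) ^ 3 * D 2 0 x t * D 0 1 x t) \<le> M\<^sup>2 / 4 * sqrt (1 + (D 1 0 x t)\<^sup>2)" .
      qed
      also have "\<dots> = M\<^sup>2 / 4 * integral {0..1} (\<lambda>x. sqrt (1 + (D 1 0 x t)\<^sup>2))" by simp
      also have "\<dots> \<le> C * integral {0..1} (\<lambda>x. sqrt (1 + (D 1 0 x t)\<^sup>2))"
      proof (rule mult_right_mono)
        show "M\<^sup>2 / 4 \<le> C" unfolding C_def using m2 m4 by linarith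
        show "0 \<le> integral {0..1} (\<lambda>x. sqrt (1 + (D 1 0 x t)\<^sup>2))"
          by (rule integral_nonneg[OF intc[OF c_sq]]) simp
      qed
      finally have le: "- integral {0..1} (\<lambda>x. 1 / sqrt (1 + (D 1 0 x t)\<^sup>2) ^ 3 * D 2 0 x t * D 0 1 x t) \<le> C * integral {0..1} (\<lambda>x. sqrt (1 + (D 1 0 x t)\<^sup>2))" .
      show "\<exists>d. ((\<lambda>s. integral {0..1} (\<lambda>x. sqrt (1 + (ux x s)\<^sup>2))) has_real_derivative d) (at t within {0..T})
           \<and> d \<le> C * integral {0..1} (\<lambda>x. sqrt (1 + (ux x t)\<^sup>2))"
        unfolding e using tr[OF L1] le by blast
      have L2: "((\<lambda>s. integral {0..1} (\<lambda>x. Fat (D 1 0 x s))) has_real_derivative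
          - integral {0..1} (\<lambda>x. 1 / (1 + (D 1 0 x t)\<^sup>2) * D 2 0 x t * D 0 1 x t)) (at t within {0..T})"
        using leibniz_ibp[OF PF Tpos perA d_Fat d_arctan c_F t] .
      have e: "integral {0..1} (\<lambda>x. 1 + (ux x t)\<^sup>2) = integral {0..1} (\<lambda>x. 1 + (D 1 0 x t)\<^sup>2)"
        using eqI[of "\<lambda>p. 1 + p\<^sup>2"] by simp
      have "- integral {0..1} (\<lambda>x. 1 / (1 + (D 1 0 x t)\<^sup>2) * D 2 0 x t * D 0 1 x t)
            \<le> integral {0..1} (\<lambda>x. M\<^sup>2 / 4 * (1 + (D 1 0 x t)\<^sup>2))"
      proof (rule neg_int_le[OF intd[OF c_F] intc])
        show "continuous_on UNIV (\<lambda>p. M\<^sup>2 / 4 * (1 + p\<^sup>2))" by (intro continuous_intros)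
        fix x :: real assume "x \<in> {0..1}"
        from pt2[OF Ebd[OF this t]]
        show "- (1 / (1 + (D 1 0 x t)\<^sup>2) * D 2 0 x t * D 0 1 x t) \<le> M\<^sup>2 / 4 * (1 + (D 1 0 x t)\<^sup>2)" .
      qed
      also have "\<dots> = M\<^sup>2 / 4 * integral {0..1} (\<lambda>x. 1 + (D 1 0 x t)\<^sup>2)" by simp
      also have "\<dots> \<le> C * integral {0..1} (\<lambda>x. 1 + (D 1 0 x t)\<^sup>2)"
      proof (rule mult_right_mono)
        show "M\<^sup>2 / 4 \<le> C" unfolding C_def using m2 m4 by linarith
        show "0 \<le> integral {0..1} (\<lambda>x. 1 + (D 1 0 x t)\<^sup>2)"
          by (rule integral_nonneg[OF intc[OF c_w]]) (simp add: add_nonneg_nonneg)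
      qed
      finally have le: "- integral {0..1} (\<lambda>x. 1 / (1 + (D 1 0 x t)\<^sup>2) * D 2 0 x t * D 0 1 x t) \<le> C * integral {0..1} (\<lambda>x. 1 + (D 1 0 x t)\<^sup>2)" .
      show "\<exists>d. ((\<lambda>s. integral {0..1} (\<lambda>x. Fat (ux x s))) has_real_derivative d) (at t within {0..T})
           \<and> d \<le> C * integral {0..1} (\<lambda>x. 1 + (ux x t)\<^sup>2)"
        unfolding e using tr[OF L2] le by blast
      have L3: "((\<lambda>s. integral {0..1} (\<lambda>x. sqrt (1 + (D 1 0 x s)\<^sup>2) ^ 3)) has_real_derivative
          - integral {0..1} (\<lambda>x. (3 * sqrt (1 + (D 1 0 x t)\<^sup>2) + 3 * (D 1 0 x t)\<^sup>2 / sqrt (1 + (D 1 0 x t)\<^sup>2)) * D 2 0 x t * D 0 1 x t)) (at t within {0..T})"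
        using leibniz_ibp[OF PF Tpos perA d_c d_c1 c_c1 t] .
      have pw: "(\<lambda>s. integral {0..1} (\<lambda>x. (1 + (ux x s)\<^sup>2) powr (3/2))) = (\<lambda>s. integral {0..1} (\<lambda>x. sqrt (1 + (ux x s)\<^sup>2) ^ 3))"
        by (simp add: powr32)
      have e: "integral {0..1} (\<lambda>x. sqrt (1 + (ux x t)\<^sup>2) ^ 3) = integral {0..1} (\<lambda>x. sqrt (1 + (D 1 0 x t)\<^sup>2) ^ 3)"
        using eqI[of "\<lambda>p. sqrt (1 + p\<^sup>2) ^ 3"] by simp
      define d where "d = - integral {0..1} (\<lambda>x. (3 * sqrt (1 + (D 1 0 x t)\<^sup>2) + 3 * (D 1 0 x t)\<^sup>2 / sqrt (1 + (D 1 0 x t)\<^sup>2)) * D 2 0 x t * D 0 1 x t)"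
      define I where "I = integral {0..1} (\<lambda>x. sqrt (1 + (D 1 0 x t)\<^sup>2) ^ 3)"
      define Gp where "Gp = integral {0..1} (\<lambda>x. (D 2 0 x t)\<^sup>2 / sqrt (1 + (D 1 0 x t)\<^sup>2))"
      define J where "J = integral {0..1} (\<lambda>x. sqrt (1 + (D 1 0 x t)\<^sup>2) ^ 5)"
      define W where "W = integral {0..1} (\<lambda>x. 1 + (D 1 0 x t)\<^sup>2)"
      have cQ: "continuous_on {0..1} (\<lambda>x. (D 2 0 x t)\<^sup>2 / sqrt (1 + (D 1 0 x t)\<^sup>2))"
      proof -
        have "continuous_on {0..1} (\<lambda>x. (D 2 0 x t)\<^sup>2 * (1 / sqrt (1 + (D 1 0 x t)\<^sup>2)))"
          by (intro continuous_intros cont_comp[OF c_inv cx] cx)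
        then show ?thesis by simp
      qed
      have iG: "(\<lambda>x. (D 2 0 x t)\<^sup>2 / sqrt (1 + (D 1 0 x t)\<^sup>2)) integrable_on {0..1}"
        using integrable_continuous_real[OF cQ] by simp
      have iI: "(\<lambda>x. sqrt (1 + (D 1 0 x t)\<^sup>2) ^ 3) integrable_on {0..1}" by (rule intc[OF c_cube])
      have iJ: "(\<lambda>x. sqrt (1 + (D 1 0 x t)\<^sup>2) ^ 5) integrable_on {0..1}" by (rule intc[OF c_five])
      have iW: "(\<lambda>x. 1 + (D 1 0 x t)\<^sup>2) integrable_on {0..1}" by (rule intc[OF c_w])
      have G0: "Gp \<ge> 0" unfolding Gp_def by (rule integral_nonneg[OF iG]) simp
      have I1: "I \<ge> 1"
      proof -
        have "integral {0..1} (\<lambda>x::real. 1::real) \<le> I" unfolding I_def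
          by (rule integral_le[OF _ iI]) (use pt5 order_trans in \<open>auto intro!: order_trans[OF _ pt5]\<close>)
        then show ?thesis by simp
      qed
      have dle: "d \<le> -(3/2) * Gp + 3 * M\<^sup>2 * J"
      proof -
        have "d \<le> integral {0..1} (\<lambda>x. (-(3/2)) * ((D 2 0 x t)\<^sup>2 / sqrt (1 + (D 1 0 x t)\<^sup>2)) + 3 * M\<^sup>2 * sqrt (1 + (D 1 0 x t)\<^sup>2) ^ 5)"
          unfolding d_def
        proof (rule neg_int_le[OF intd[OF c_c1]])
          show "(\<lambda>x. (-(3/2)) * ((D 2 0 x t)\<^sup>2 / sqrt (1 + (D 1 0 x t)\<^sup>2)) + 3 * M\<^sup>2 * sqrt (1 + (D 1 0 x t)\<^sup>2) ^ 5) integrable_on {0..1}"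
            using iG iJ by (intro integrable_add int_cm)
          fix x :: real assume "x \<in> {0..1}"
          from pt3[OF Ebd[OF this t]]
          show "- ((3 * sqrt (1 + (D 1 0 x t)\<^sup>2) + 3 * (D 1 0 x t)\<^sup>2 / sqrt (1 + (D 1 0 x t)\<^sup>2)) * D 2 0 x t * D 0 1 x t)
             \<le> (-(3/2)) * ((D 2 0 x t)\<^sup>2 / sqrt (1 + (D 1 0 x t)\<^sup>2)) + 3 * M\<^sup>2 * sqrt (1 + (D 1 0 x t)\<^sup>2) ^ 5" by simp
        qed
        also have "\<dots> = -(3/2) * Gp + 3 * M\<^sup>2 * J"
          unfolding Gp_def J_def
          by (simp only: integral_add[OF int_cm[OF iG] int_cm[OF iJ]] integral_mult_right)
        finally show ?thesis .
      qed
      define lam where "lam = 2 * (M\<^sup>2 + 1) * I"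
      have lam0: "lam > 0"
      proof -
        have "M\<^sup>2 + 1 > 0" using m2 by linarith
        then have "2 * (M\<^sup>2 + 1) > 0" by simp
        moreover have "I > 0" using I1 by simp
        ultimately show ?thesis unfolding lam_def by simp
      qed
      define f' where "f' x = 2 * D 1 0 x t * D 2 0 x t" for x
      have fd: "((\<lambda>y. 1 + (D 1 0 y t)\<^sup>2) has_real_derivative f' x) (at x within {0..1})" if x: "x \<in> {0..1}" for x
      proof -
        have b: "((\<lambda>y. D 1 0 y t) has_real_derivative D 2 0 x t) (at x within {0..1})"
          using pf_dx[OF PF x t, of 1 0] by (simp add: numeral_2_eq_2)
        show ?thesis unfolding f'_def power2_eq_square
          using DERIV_add[OF DERIV_const[of 1] DERIV_mult[OF b b]] by (simp add: algebra_simps)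
      qed
      have cf': "continuous_on {0..1} f'" unfolding f'_def by (intro continuous_intros cx)
      define Lb where "Lb = integral {0..1} (\<lambda>z. \<bar>f' z\<bar>)"
      have Lle: "Lb \<le> lam * I + Gp / lam"
      proof -
        have "Lb \<le> integral {0..1} (\<lambda>x. lam * sqrt (1 + (D 1 0 x t)\<^sup>2) ^ 3 + (1 / lam) * ((D 2 0 x t)\<^sup>2 / sqrt (1 + (D 1 0 x t)\<^sup>2)))"
          unfolding Lb_def
        proof (rule integral_le)
          show "(\<lambda>z. \<bar>f' z\<bar>) integrable_on {0..1}" by (intro integrable_continuous_real continuous_intros cf')
          show "(\<lambda>x. lam * sqrt (1 + (D 1 0 x t)\<^sup>2) ^ 3 + (1 / lam) * ((D 2 0 x t)\<^sup>2 / sqrt (1 + (D 1 0 x t)\<^sup>2))) integrable_on {0..1}"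
            using iG iI by (intro integrable_add int_cm)
          fix x :: real
          show "\<bar>f' x\<bar> \<le> lam * sqrt (1 + (D 1 0 x t)\<^sup>2) ^ 3 + (1 / lam) * ((D 2 0 x t)\<^sup>2 / sqrt (1 + (D 1 0 x t)\<^sup>2))"
            using pt4[OF lam0, of "D 1 0 x t" "D 2 0 x t"] unfolding f'_def by (simp add: mult.commute)
        qed
        also have "\<dots> = lam * I + Gp / lam"
          unfolding Gp_def I_def
          by (simp only: integral_add[OF int_cm[OF iI] int_cm[OF iG]] integral_mult_right) simp
        finally show ?thesis .
      qed
      have WI: "W \<le> I" unfolding W_def I_def by (rule integral_le[OF iW iI]) (rule pt5)
      define S where "S = I + lam * I + Gp / lam"
      have wS: "1 + (D 1 0 x t)\<^sup>2 \<le> S" if x: "x \<in> {0..1}" for x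
      proof -
        have "integral {0..1} (\<lambda>y::real. 1 + (D 1 0 x t)\<^sup>2) \<le> integral {0..1} (\<lambda>y. (1 + (D 1 0 y t)\<^sup>2) + Lb)"
        proof (rule integral_le)
          show "(\<lambda>y. 1 + (D 1 0 y t)\<^sup>2 + Lb) integrable_on {0..1}" by (rule integrable_add[OF iW integrable_continuous_real[OF continuous_on_const]])
          fix y :: real assume y: "y \<in> {0..1}"
          show "1 + (D 1 0 x t)\<^sup>2 \<le> 1 + (D 1 0 y t)\<^sup>2 + Lb"
            using osc[of "\<lambda>y. 1 + (D 1 0 y t)\<^sup>2" f', OF fd cf' x y] unfolding Lb_def by simp
        qed (rule integrable_continuous_real[OF continuous_on_const])
        also have "\<dots> = W + Lb" unfolding W_def
          by (simp only: integral_add[OF iW integrable_continuous_real[OF continuous_on_const]]) simp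
        finally show ?thesis unfolding S_def using WI Lle by simp
      qed
      have JS: "J \<le> (I + lam * I + Gp / lam) * I"
      proof -
        have "J \<le> integral {0..1} (\<lambda>x. S * sqrt (1 + (D 1 0 x t)\<^sup>2) ^ 3)"
          unfolding J_def by (rule integral_le[OF iJ int_cm[OF iI]]) (use wS pt6 in auto)
        then show ?thesis unfolding S_def I_def by simp
      qed
      have final: "d \<le> C + C * I ^ 3"
        unfolding C_def by (rule fin3[OF I1 G0 dle]) (use JS in \<open>simp add: lam_def\<close>)
      have e2: "integral {0..1} (\<lambda>x. (1 + (ux x t)\<^sup>2) powr (3/2)) = I"
        unfolding I_def using e by (simp add: powr32)
      show "\<exists>d. ((\<lambda>s. integral {0..1} (\<lambda>x. (1 + (ux x s)\<^sup>2) powr (3/2))) has_real_derivative d) (at t within {0..T})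
           \<and> d \<le> C + C * (integral {0..1} (\<lambda>x. (1 + (ux x t)\<^sup>2) powr (3/2))) ^ 3"
        unfolding e2 pw using tr[OF L3[folded d_def]] final by blast
  qed
qed

end
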